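(* Either $g(n)\le 3$ for all $n$ or $g(n)\to\infty$; either $h(n)\le 3$ for all $n$ or $h(n)\to\infty$; and either $f(n)\le 9$ for all $n$ or $f(n)\to\infty$.
   Context: For a digraph $D$, $\chi(D)$ is the chromatic number of its underlying graph; $D^{-1}$ is $D$ with arcs reversed; $D_1\times D_2$ has vertex set $V(D_1)\times V(D_2)$ and arc $(x,y)\to(x',y')$ iff $(x,x')$ is an arc of $D_1$ and $(y,y')$ an arc of $D_2$ (graph product $G\times H$ analogously with edges: $(x,y)\sim(x',y')$ iff $xx'\in E(G)$, $yy'\in E(H)$). $f(n)=\min\{\chi(G\times H):\chi(G),\chi(H)\ge n\}$ over graphs; $g(n)=\min\{\chi(D_1\times D_2):\chi(D_1),\chi(D_2)\ge n\}$ and $h(n)=\min\{\max\{\chi(D_1\times D_2),\chi(D_1\times D_2^{-1})\}:\chi(D_1),\chi(D_2)\ge n\}$ over digraphs (digons allowed). These functions are non-decreasing in $n$. *)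

theory Defs
  imports Main
begin

text \<open>A (finite, loopless) digraph is a pair (V, A) of a finite vertex set and an arc set
  A \<subseteq> V \<times> V with no loops; digons (both (u,v) and (v,u)) are allowed.\<close>

definition is_digraph :: "'a set \<times> ('a \<times> 'a) set \<Rightarrow> bool" where
  "is_digraph D \<longleftrightarrow> finite (fst D) \<and> snd D \<subseteq> fst D \<times> fst D \<and> irrefl (snd D)"

definition is_graph :: "'a set \<times> ('a \<times> 'a) set \<Rightarrow> bool" where
  "is_graph G \<longleftrightarrow> is_digraph G \<and> sym (snd G)"

definition proper_colouring :: "'a set \<times> ('a \<times> 'a) set \<Rightarrow> nat \<Rightarrow> ('a \<Rightarrow> nat) \<Rightarrow> bool" where
  "proper_colouring D k c \<longleftrightarrow>
     (\<forall>v\<in>fst D. c v < k) \<and> (\<forall>(u,v)\<in>snd D. c u \<noteq> c v)"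

text \<open>Chromatic number of the underlying graph.\<close>
definition chi :: "'a set \<times> ('a \<times> 'a) set \<Rightarrow> nat" where
  "chi D = (LEAST k. \<exists>c. proper_colouring D k c)"

definition dprod :: "'a set \<times> ('a \<times> 'a) set \<Rightarrow> 'b set \<times> ('b \<times> 'b) set
    \<Rightarrow> ('a \<times> 'b) set \<times> (('a \<times> 'b) \<times> ('a \<times> 'b)) set" where
  "dprod D1 D2 = (fst D1 \<times> fst D2,
     {((x,y),(x',y')). (x,x') \<in> snd D1 \<and> (y,y') \<in> snd D2})"

definition drev :: "'a set \<times> ('a \<times> 'a) set \<Rightarrow> 'a set \<times> ('a \<times> 'a) set" where
  "drev D = (fst D, (snd D)\<inverse>)"

text \<open>The minima are taken over all finite graphs/digraphs (up to isomorphism every finite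
  graph lives on a finite subset of nat).\<close>
definition f_fun :: "nat \<Rightarrow> nat" where
  "f_fun n = (LEAST k. \<exists>(G::nat set \<times> (nat \<times> nat) set) (H::nat set \<times> (nat \<times> nat) set).
      is_graph G \<and> is_graph H \<and> chi G \<ge> n \<and> chi H \<ge> n \<and> chi (dprod G H) = k)"

definition g_fun :: "nat \<Rightarrow> nat" where
  "g_fun n = (LEAST k. \<exists>(D1::nat set \<times> (nat \<times> nat) set) (D2::nat set \<times> (nat \<times> nat) set).
      is_digraph D1 \<and> is_digraph D2 \<and> chi D1 \<ge> n \<and> chi D2 \<ge> n \<and> chi (dprod D1 D2) = k)"

definition h_fun :: "nat \<Rightarrow> nat" where
  "h_fun n = (LEAST k. \<exists>(D1::nat set \<times> (nat \<times> nat) set) (D2::nat set \<times> (nat \<times> nat) set).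
      is_digraph D1 \<and> is_digraph D2 \<and> chi D1 \<ge> n \<and> chi D2 \<ge> n \<and>
      max (chi (dprod D1 D2)) (chi (dprod D1 (drev D2))) = k)"

end

theory Submission
  imports Defs "HOL-Library.Nat_Bijection"
begin

definition hom :: "('a \<Rightarrow> 'b) \<Rightarrow> 'a set \<times> ('a \<times> 'a) set \<Rightarrow> 'b set \<times> ('b \<times> 'b) set \<Rightarrow> bool" where
  "hom \<phi> D E \<longleftrightarrow> (\<forall>v\<in>fst D. \<phi> v \<in> fst E) \<and> (\<forall>(u,v)\<in>snd D. (\<phi> u, \<phi> v) \<in> snd E)"

definition dn :: "nat set \<times> (nat \<times> nat) set \<Rightarrow> nat set \<times> (nat \<times> nat) set" where
  "dn D = (prod_encode ` snd D,
     {(prod_encode (u,v), prod_encode (v,w)) | u v w. (u,v) \<in> snd D \<and> (v,w) \<in> snd D})"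

definition P :: "nat set \<times> (nat \<times> nat) set \<Rightarrow> nat set \<times> (nat \<times> nat) set \<Rightarrow> nat set \<times> (nat \<times> nat) set" where
  "P X Y = (prod_encode ` (fst X \<times> fst Y),
     {(prod_encode (x,y), prod_encode (x',y')) | x y x' y'. (x,x') \<in> snd X \<and> (y,y') \<in> snd Y})"

lemma colour_hom: "hom \<phi> D E \<Longrightarrow> proper_colouring E k c \<Longrightarrow> proper_colouring D k (c \<circ> \<phi>)"
  unfolding hom_def proper_colouring_def by fastforce

lemma colour_mono: "k \<le> k' \<Longrightarrow> proper_colouring D k c \<Longrightarrow> proper_colouring D k' c"
  unfolding proper_colouring_def by fastforce

lemma chi_le: "proper_colouring D k c \<Longrightarrow> chi D \<le> k"
  unfolding chi_def by (rule Least_le) blast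

lemma col_exists: assumes "is_digraph D" shows "\<exists>k c. proper_colouring D k c"
proof -
  have fin: "finite (fst D)" and sub: "snd D \<subseteq> fst D \<times> fst D" and irr: "irrefl (snd D)"
    using assms unfolding is_digraph_def by auto
  obtain f :: "'a \<Rightarrow> nat" and n :: nat where f1: "f ` fst D = {i. i < n}" and f2: "inj_on f (fst D)"
    using finite_imp_inj_to_nat_seg[OF fin] by blast
  have A: "\<forall>v\<in>fst D. f v < n"
  proof
    fix v assume "v \<in> fst D"
    then have "f v \<in> f ` fst D" by (rule imageI)
    then show "f v < n" using f1 by simp
  qed
  have B: "\<forall>(u,v)\<in>snd D. f u \<noteq> f v"
  proof (rule ballI)
    fix p assume p: "p \<in> snd D"
    obtain u v where uv: "p = (u,v)" by (cases p)
    have "u \<noteq> v" using irr p uv unfolding irrefl_def by auto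
    moreover have "u \<in> fst D" "v \<in> fst D" using sub p uv by auto
    ultimately have "f u \<noteq> f v" using f2 unfolding inj_on_def by blast
    then show "case p of (u,v) \<Rightarrow> f u \<noteq> f v" using uv by simp
  qed
  have "proper_colouring D n f" unfolding proper_colouring_def using A B by blast
  then show ?thesis by blast
qed

lemma chi_col: assumes "is_digraph D" shows "\<exists>c. proper_colouring D (chi D) c"
  using col_exists[OF assms] unfolding chi_def by (rule LeastI_ex)

lemma chi_hom: "hom \<phi> D E \<Longrightarrow> is_digraph E \<Longrightarrow> chi D \<le> chi E"
  using chi_col colour_hom chi_le by metis

lemma hom_comp: "hom \<phi> D E \<Longrightarrow> hom \<psi> E F \<Longrightarrow> hom (\<psi> \<circ> \<phi>) D F"
  unfolding hom_def by fastforce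

lemma hom_id: "hom id D D"
  unfolding hom_def by auto

lemma dn_digraph: "is_digraph D \<Longrightarrow> is_digraph (dn D)"
proof -
  assume a: "is_digraph D"
  then have fin: "finite (snd D)" unfolding is_digraph_def
    using finite_subset finite_cartesian_product by blast
  have 1: "finite (fst (dn D))" using fin unfolding dn_def by simp
  have 2: "snd (dn D) \<subseteq> fst (dn D) \<times> fst (dn D)" unfolding dn_def by auto
  have 3: "irrefl (snd (dn D))"
    unfolding irrefl_def
  proof
    fix e show "(e, e) \<notin> snd (dn D)"
    proof
      assume "(e, e) \<in> snd (dn D)"
      then obtain u v w where "(u,v) \<in> snd D" "prod_encode (u,v) = prod_encode (v,w)"
        unfolding dn_def by auto
      then show False using a unfolding is_digraph_def irrefl_def by auto
    qed
  qed
  show ?thesis using 1 2 3 unfolding is_digraph_def by blast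
qed

lemma dn_iter_digraph: "is_digraph D \<Longrightarrow> is_digraph ((dn ^^ r) D)"
  by (induction r) (auto simp: dn_digraph)

lemma P_digraph: "is_digraph X \<Longrightarrow> is_digraph Y \<Longrightarrow> is_digraph (P X Y)"
  unfolding is_digraph_def P_def irrefl_def by auto

lemma drev_digraph: "is_digraph X \<Longrightarrow> is_digraph (drev X)"
  unfolding is_digraph_def drev_def irrefl_def by auto

lemma dprod_digraph: "is_digraph X \<Longrightarrow> is_digraph Y \<Longrightarrow> is_digraph (dprod X Y)"
  unfolding is_digraph_def dprod_def irrefl_def by auto

lemma chi_dprod_P: "is_digraph X \<Longrightarrow> is_digraph Y \<Longrightarrow> chi (dprod X Y) = chi (P X Y)"
proof -
  assume a: "is_digraph X" "is_digraph Y"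
  have "hom prod_encode (dprod X Y) (P X Y)" unfolding hom_def dprod_def P_def by auto
  moreover have "hom prod_decode (P X Y) (dprod X Y)" unfolding hom_def dprod_def P_def by auto
  ultimately have "chi (dprod X Y) \<le> chi (P X Y)" "chi (P X Y) \<le> chi (dprod X Y)"
    using chi_hom P_digraph dprod_digraph a by blast+
  then show ?thesis by simp
qed


lemma hom_dn: "hom \<phi> D E \<Longrightarrow> hom (\<lambda>e. prod_encode (map_prod \<phi> \<phi> (prod_decode e))) (dn D) (dn E)"
  unfolding hom_def dn_def by auto


lemma hom_P: "hom \<phi> X X' \<Longrightarrow> hom \<psi> Y Y' \<Longrightarrow>
   hom (\<lambda>e. prod_encode (map_prod \<phi> \<psi> (prod_decode e))) (P X Y) (P X' Y')"
  unfolding hom_def P_def by auto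

definition tau :: "nat \<Rightarrow> nat" where
  "tau e = (case prod_decode e of (a,b) \<Rightarrow> case prod_decode a of (x,x') \<Rightarrow>
      case prod_decode b of (y,y') \<Rightarrow> prod_encode (prod_encode (x,y), prod_encode (x',y')))"

lemma hom_tau: "hom tau (P (dn X) (dn Y)) (dn (P X Y))"
  unfolding hom_def P_def dn_def tau_def by auto

definition sig :: "nat \<Rightarrow> nat" where
  "sig e = (case prod_decode e of (a,b) \<Rightarrow> prod_encode (b,a))"

lemma hom_sig: "hom sig (drev (dn B)) (dn (drev B))"
  unfolding hom_def drev_def dn_def sig_def by auto


lemma hom_iterP: "\<exists>\<phi>. hom \<phi> (P ((dn ^^ r) X) ((dn ^^ r) Y)) ((dn ^^ r) (P X Y))"
proof (induction r)
  case 0 show ?case by (rule exI[of _ id]) (simp add: hom_id[unfolded id_def])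
next
  case (Suc r)
  then obtain \<phi> where "hom \<phi> (P ((dn ^^ r) X) ((dn ^^ r) Y)) ((dn ^^ r) (P X Y))" by blast
  from hom_comp[OF hom_tau hom_dn[OF this]] show ?case by auto
qed

lemma hom_iterrev: "\<exists>\<phi>. hom \<phi> (drev ((dn ^^ r) B)) ((dn ^^ r) (drev B))"
proof (induction r)
  case 0 show ?case by (rule exI[of _ id]) (simp add: hom_id[unfolded id_def])
next
  case (Suc r)
  then obtain \<phi> where "hom \<phi> (drev ((dn ^^ r) B)) ((dn ^^ r) (drev B))" by blast
  from hom_comp[OF hom_sig hom_dn[OF this]] show ?case by auto
qed

lemma set_encode_lessThan: "set_encode {..<k} < 2 ^ k"
proof (induction k)
  case 0 then show ?case by simp
next
  case (Suc k)
  have "{..<Suc k} = insert k {..<k}" by auto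
  then show ?case using Suc by simp
qed

lemma set_encode_bound: "A \<subseteq> {..<k} \<Longrightarrow> set_encode A < 2 ^ k"
proof -
  assume "A \<subseteq> {..<k}"
  then have "set_encode A \<le> set_encode {..<k}"
    unfolding set_encode_def by (intro sum_mono2) auto
  then show ?thesis using set_encode_lessThan le_less_trans by blast
qed

lemma chi_low: assumes "is_digraph D" shows "chi D \<le> 2 ^ chi (dn D)"
proof -
  define k where "k = chi (dn D)"
  obtain c where c: "proper_colouring (dn D) k c" using chi_col dn_digraph assms k_def by blast
  define S where "S v = {c (prod_encode (u,v)) | u. (u,v) \<in> snd D}" for v
  have Ssub: "S v \<subseteq> {..<k}" for v
    using c unfolding S_def proper_colouring_def dn_def by auto
  then have fin: "finite (S v)" for v using finite_subset by blast
  have "proper_colouring D (2^k) (\<lambda>v. set_encode (S v))"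
    unfolding proper_colouring_def
  proof (intro conjI ballI)
    fix v show "set_encode (S v) < 2^k" using set_encode_bound[OF Ssub] .
  next
    fix p assume p: "p \<in> snd D"
    obtain v w where vw: "p = (v,w)" by (cases p)
    have x: "c (prod_encode (v,w)) \<in> S w" using p vw unfolding S_def by auto
    have "c (prod_encode (v,w)) \<notin> S v"
    proof
      assume "c (prod_encode (v,w)) \<in> S v"
      then obtain u where u: "(u,v) \<in> snd D" "c (prod_encode (u,v)) = c (prod_encode (v,w))"
        unfolding S_def by auto
      have "(prod_encode (u,v), prod_encode (v,w)) \<in> snd (dn D)"
        using u p vw unfolding dn_def by auto
      then show False using c u(2) unfolding proper_colouring_def by auto
    qed
    then have "S v \<noteq> S w" using x by blast
    then show "case p of (u,v) \<Rightarrow> set_encode (S u) \<noteq> set_encode (S v)"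
      using vw fin set_encode_eq by auto
  qed
  then show ?thesis using chi_le k_def by blast
qed

lemma chi_antichain:
  assumes "is_digraph D" "proper_colouring D K c" "\<forall>i<K. \<phi> i \<subseteq> {..<k}"
    "\<forall>i<K. \<forall>j<K. i \<noteq> j \<longrightarrow> (\<exists>x. x \<in> \<phi> j \<and> x \<notin> \<phi> i)"
  shows "chi (dn D) \<le> k"
proof -
  define col where "col e = (case prod_decode e of (u,v) \<Rightarrow> SOME x. x \<in> \<phi> (c v) \<and> x \<notin> \<phi> (c u))" for e
  have sub: "snd D \<subseteq> fst D \<times> fst D" using assms(1) unfolding is_digraph_def by auto
  have key: "col (prod_encode (u,v)) \<in> \<phi> (c v) \<and> col (prod_encode (u,v)) \<notin> \<phi> (c u)"
    if "(u,v) \<in> snd D" for u v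
  proof -
    have "c u < K" "c v < K" "c u \<noteq> c v" using assms(2) that sub unfolding proper_colouring_def by auto
    then have "\<exists>x. x \<in> \<phi> (c v) \<and> x \<notin> \<phi> (c u)" using assms(4) by blast
    then have "(SOME x. x \<in> \<phi> (c v) \<and> x \<notin> \<phi> (c u)) \<in> \<phi> (c v) \<and>
       (SOME x. x \<in> \<phi> (c v) \<and> x \<notin> \<phi> (c u)) \<notin> \<phi> (c u)" by (rule someI_ex)
    then show ?thesis unfolding col_def by simp
  qed
  have "proper_colouring (dn D) k col"
    unfolding proper_colouring_def
  proof (intro conjI ballI)
    fix e assume "e \<in> fst (dn D)"
    then obtain u v where uv: "(u,v) \<in> snd D" "e = prod_encode (u,v)" unfolding dn_def by auto
    have "c v < K" using assms(2) uv sub unfolding proper_colouring_def by auto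
    then show "col e < k" using key[OF uv(1)] uv assms(3) by auto
  next
    fix p assume "p \<in> snd (dn D)"
    then obtain u v w where uvw: "(u,v) \<in> snd D" "(v,w) \<in> snd D"
      "p = (prod_encode (u,v), prod_encode (v,w))" unfolding dn_def by auto
    then show "case p of (a,b) \<Rightarrow> col a \<noteq> col b" using key[OF uvw(1)] key[OF uvw(2)] by auto
  qed
  then show ?thesis using chi_le by blast
qed


definition tbl :: "nat list" where "tbl = [0, 0, 0, 0, 1, 0, 1, 1, 2, 2, 0, 2, 0, 0, 0, 0, 0, 2, 0, 2, 0, 0, 0, 0, 2, 2, 0, 2, 0, 2, 0, 0, 0, 0, 0, 1, 1, 0, 1, 1, 0, 0, 0, 0, 0, 0, 1, 0, 0, 2, 1, 1, 1, 0, 1, 1, 2, 2, 0, 2, 0, 0, 0, 0]"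

definition T :: "nat \<Rightarrow> nat \<Rightarrow> nat \<Rightarrow> nat" where "T a b c = tbl ! (16*a+4*b+c)"

lemma four_cases: "(a::nat) < 4 \<Longrightarrow> a = 0 \<or> a = 1 \<or> a = 2 \<or> a = 3" by auto

lemma T_bound: assumes "a < 4" "b < 4" "c < 4" shows "T a b c < 3"
  using four_cases[OF assms(1)] four_cases[OF assms(2)] four_cases[OF assms(3)]
  by (auto simp: T_def tbl_def)

lemma T_ok: assumes "a < 4" "b < 4" "c < 4" "d < 4" "a \<noteq> b" "b \<noteq> c" "c \<noteq> d"
  shows "T a b c \<noteq> T b c d"
  using four_cases[OF assms(1)] four_cases[OF assms(2)] four_cases[OF assms(3)] four_cases[OF assms(4)] assms(5-7)
  by (auto simp: T_def tbl_def)


lemma chi_table: assumes "is_digraph D" "proper_colouring D 4 c" shows "chi (dn (dn D)) \<le> 3"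
proof -
  define col where "col E = (case prod_decode E of (e1,e2) \<Rightarrow> case prod_decode e1 of (u,v) \<Rightarrow>
     case prod_decode e2 of (v',w) \<Rightarrow> T (c u) (c v) (c w))" for E
  have sub: "snd D \<subseteq> fst D \<times> fst D" using assms(1) unfolding is_digraph_def by auto
  have cl: "c u < 4" "c v < 4" "c u \<noteq> c v" if "(u,v) \<in> snd D" for u v
    using assms(2) that sub unfolding proper_colouring_def by auto
  have colv: "col (prod_encode (prod_encode (u,v), prod_encode (v,w))) = T (c u) (c v) (c w)" for u v w
    unfolding col_def by simp
  have "proper_colouring (dn (dn D)) 3 col"
    unfolding proper_colouring_def
  proof (intro conjI ballI)
    fix E assume "E \<in> fst (dn (dn D))"
    then obtain u v w where "(u,v) \<in> snd D" "(v,w) \<in> snd D"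
      "E = prod_encode (prod_encode (u,v), prod_encode (v,w))" unfolding dn_def by auto
    then show "col E < 3" using colv cl T_bound by metis
  next
    fix p assume "p \<in> snd (dn (dn D))"
    then obtain u v w x where uvw: "(u,v) \<in> snd D" "(v,w) \<in> snd D" "(w,x) \<in> snd D"
      "p = (prod_encode (prod_encode (u,v), prod_encode (v,w)), prod_encode (prod_encode (v,w), prod_encode (w,x)))"
      unfolding dn_def by auto
    have "T (c u) (c v) (c w) \<noteq> T (c v) (c w) (c x)"
      using T_ok cl[OF uvw(1)] cl[OF uvw(2)] cl[OF uvw(3)] by blast
    then show "case p of (a,b) \<Rightarrow> col a \<noteq> col b" using uvw(4) colv by simp
  qed
  then show ?thesis using chi_le by blast
qed

lemma chi_colouring_le: assumes "is_digraph D" "chi D \<le> K" shows "\<exists>c. proper_colouring D K c"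
  using chi_col[OF assms(1)] colour_mono[OF assms(2)] by blast

definition phi6 :: "nat \<Rightarrow> nat set" where
  "phi6 i = [{0,1},{0,2},{0,3},{1,2},{1,3},{2,3}] ! i"

lemma six_cases: "(a::nat) < 6 \<Longrightarrow> a = 0 \<or> a = 1 \<or> a = 2 \<or> a = 3 \<or> a = 4 \<or> a = 5" by auto

lemma phi6_sub: "\<forall>i<6. phi6 i \<subseteq> {..<4}"
proof (intro allI impI)
  fix i :: nat assume "i < 6" then show "phi6 i \<subseteq> {..<4}" using six_cases[of i] by (auto simp: phi6_def)
qed

lemma phi6_anti: "\<forall>i<6. \<forall>j<6. i \<noteq> j \<longrightarrow> (\<exists>x. x \<in> phi6 j \<and> x \<notin> phi6 i)"
proof (intro allI impI)
  fix i j :: nat assume "i < 6" "j < 6" "i \<noteq> j"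
  then show "\<exists>x. x \<in> phi6 j \<and> x \<notin> phi6 i"
    using six_cases[of i] six_cases[of j] by (auto simp: phi6_def)
qed

lemma reduce: "\<exists>r. \<forall>D. is_digraph D \<longrightarrow> chi D \<le> K \<longrightarrow> chi ((dn ^^ r) D) \<le> 3"
proof (induction K rule: less_induct)
  case (less K)
  consider "K \<le> 4" | "K = 5 \<or> K = 6" | "K \<ge> 7" by linarith
  then show ?case
  proof cases
    case 1
    have "chi ((dn ^^ 2) D) \<le> 3" if d: "is_digraph D" "chi D \<le> K" for D
    proof -
      obtain c where "proper_colouring D 4 c" using chi_colouring_le[OF d(1)] d(2) 1 by fastforce
      then show ?thesis using chi_table[OF d(1)] by (simp add: numeral_2_eq_2)
    qed
    then show ?thesis by blast
  next
    case 2
    then obtain r where r: "\<forall>D. is_digraph D \<longrightarrow> chi D \<le> 4 \<longrightarrow> chi ((dn ^^ r) D) \<le> 3"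
      using less.IH[of 4] by auto
    have "chi ((dn ^^ Suc r) D) \<le> 3" if d: "is_digraph D" "chi D \<le> K" for D
    proof -
      obtain c where "proper_colouring D 6 c" using chi_colouring_le[OF d(1)] d(2) 2 by fastforce
      then have "chi (dn D) \<le> 4" using chi_antichain[OF d(1) _ phi6_sub phi6_anti] by blast
      then have "chi ((dn ^^ r) (dn D)) \<le> 3" using r dn_digraph[OF d(1)] by blast
      then show ?thesis by (simp only: funpow_Suc_right comp_apply)
    qed
    then show ?thesis by blast
  next
    case 3
    define j where "j = (K - 1) div 2"
    have j3: "j \<ge> 3" using 3 j_def by auto
    have jK: "2 * j < K" using 3 j_def by auto
    have Kj: "K \<le> j * j"
    proof -
      have "K \<le> 3 * j" using 3 j_def by auto
      also have "\<dots> \<le> j * j" using j3 by simp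
      finally show ?thesis .
    qed
    obtain r where r: "\<forall>D. is_digraph D \<longrightarrow> chi D \<le> 2 * j \<longrightarrow> chi ((dn ^^ r) D) \<le> 3"
      using less.IH[OF jK] by auto
    define \<phi> where "\<phi> i = {i div j, j + i mod j}" for i
    have jpos: "j > 0" using j3 by auto
    have divl: "i div j < j" if "i < j * j" for i using that jpos by (simp add: less_mult_imp_div_less)
    have sub: "\<forall>i<j*j. \<phi> i \<subseteq> {..<2*j}"
    proof (intro allI impI)
      fix i assume "i < j * j"
      then show "\<phi> i \<subseteq> {..<2*j}" using divl[of i] jpos unfolding \<phi>_def by auto
    qed
    have anti: "\<forall>i<j*j. \<forall>i'<j*j. i \<noteq> i' \<longrightarrow> (\<exists>x. x \<in> \<phi> i' \<and> x \<notin> \<phi> i)"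
    proof (intro allI impI)
      fix i i' assume ii: "i < j*j" "i' < j*j" "i \<noteq> i'"
      show "\<exists>x. x \<in> \<phi> i' \<and> x \<notin> \<phi> i"
      proof (cases "i div j = i' div j")
        case True
        then have "i mod j \<noteq> i' mod j" using ii(3) by (metis div_mod_decomp)
        then show ?thesis using divl[OF ii(1)] unfolding \<phi>_def by (intro exI[of _ "j + i' mod j"]) auto
      next
        case False
        then show ?thesis using divl[OF ii(2)] unfolding \<phi>_def by (intro exI[of _ "i' div j"]) auto
      qed
    qed
    have "chi ((dn ^^ Suc r) D) \<le> 3" if d: "is_digraph D" "chi D \<le> K" for D
    proof -
      obtain c where "proper_colouring D (j*j) c" using chi_colouring_le[OF d(1)] d(2) Kj by fastforce
      then have "chi (dn D) \<le> 2 * j" using chi_antichain[OF d(1) _ sub anti] by blast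
      then have "chi ((dn ^^ r) (dn D)) \<le> 3" using r dn_digraph[OF d(1)] by blast
      then show ?thesis by (simp only: funpow_Suc_right comp_apply)
    qed
    then show ?thesis by blast
  qed
qed

lemma lowiter: "\<exists>N. \<forall>D. is_digraph D \<longrightarrow> N \<le> chi D \<longrightarrow> n \<le> chi ((dn ^^ r) D)"
proof (induction r arbitrary: n)
  case 0 then show ?case by auto
next
  case (Suc r)
  obtain N where N: "\<forall>D. is_digraph D \<longrightarrow> N \<le> chi D \<longrightarrow> n \<le> chi ((dn ^^ r) D)" using Suc by blast
  have "n \<le> chi ((dn ^^ Suc r) D)" if d: "is_digraph D" "2 ^ N \<le> chi D" for D
  proof -
    have "N \<le> chi (dn D)"
    proof (rule ccontr)
      assume "\<not> N \<le> chi (dn D)"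
      then have "(2::nat) ^ chi (dn D) < 2 ^ N" by simp
      then show False using chi_low[OF d(1)] d(2) by linarith
    qed
    then have "n \<le> chi ((dn ^^ r) (dn D))" using N dn_digraph[OF d(1)] by blast
    then show ?thesis by (simp only: funpow_Suc_right comp_apply)
  qed
  then show ?case by blast
qed


definition Kn :: "nat \<Rightarrow> nat set \<times> (nat \<times> nat) set" where
  "Kn n = ({0..<n}, {(a,b). a < n \<and> b < n \<and> a \<noteq> b})"

lemma Kn_graph: "is_graph (Kn n)"
  unfolding is_graph_def is_digraph_def Kn_def irrefl_def sym_def by auto

lemma Kn_chi: "n \<le> chi (Kn n)"
proof -
  have dg: "is_digraph (Kn n)" using Kn_graph unfolding is_graph_def by blast
  obtain c where c: "proper_colouring (Kn n) (chi (Kn n)) c" using chi_col[OF dg] by blast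
  have inj: "inj_on c {0..<n}"
  proof (rule inj_onI)
    fix a b assume ab: "a \<in> {0..<n}" "b \<in> {0..<n}" "c a = c b"
    show "a = b"
    proof (rule ccontr)
      assume "a \<noteq> b"
      then have "(a,b) \<in> snd (Kn n)" using ab unfolding Kn_def by auto
      then show False using c ab(3) unfolding proper_colouring_def by auto
    qed
  qed
  have "c ` {0..<n} \<subseteq> {..<chi (Kn n)}" using c unfolding proper_colouring_def Kn_def by auto
  from card_inj_on_le[OF inj this] show ?thesis by simp
qed

lemma Kn_digraph: "is_digraph (Kn n)" using Kn_graph unfolding is_graph_def by blast

lemma g_spec: "\<exists>(D1::nat set \<times> (nat \<times> nat) set) (D2::nat set \<times> (nat \<times> nat) set).
      is_digraph D1 \<and> is_digraph D2 \<and> chi D1 \<ge> n \<and> chi D2 \<ge> n \<and> chi (dprod D1 D2) = g_fun n"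
  unfolding g_fun_def by (rule LeastI_ex) (use Kn_digraph Kn_chi in blast)

lemma g_le: "is_digraph D1 \<Longrightarrow> is_digraph D2 \<Longrightarrow> chi D1 \<ge> n \<Longrightarrow> chi D2 \<ge> n \<Longrightarrow>
   g_fun n \<le> chi (dprod (D1::nat set \<times> (nat \<times> nat) set) (D2::nat set \<times> (nat \<times> nat) set))"
  unfolding g_fun_def by (rule Least_le) blast

lemma h_spec: "\<exists>(D1::nat set \<times> (nat \<times> nat) set) (D2::nat set \<times> (nat \<times> nat) set).
      is_digraph D1 \<and> is_digraph D2 \<and> chi D1 \<ge> n \<and> chi D2 \<ge> n \<and>
      max (chi (dprod D1 D2)) (chi (dprod D1 (drev D2))) = h_fun n"
  unfolding h_fun_def by (rule LeastI_ex) (use Kn_digraph Kn_chi in blast)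

lemma h_le: "is_digraph D1 \<Longrightarrow> is_digraph D2 \<Longrightarrow> chi D1 \<ge> n \<Longrightarrow> chi D2 \<ge> n \<Longrightarrow>
   h_fun n \<le> max (chi (dprod (D1::nat set \<times> (nat \<times> nat) set) (D2::nat set \<times> (nat \<times> nat) set)))
     (chi (dprod D1 (drev D2)))"
  unfolding h_fun_def by (rule Least_le) blast

lemma f_spec: "\<exists>(G::nat set \<times> (nat \<times> nat) set) (H::nat set \<times> (nat \<times> nat) set).
      is_graph G \<and> is_graph H \<and> chi G \<ge> n \<and> chi H \<ge> n \<and> chi (dprod G H) = f_fun n"
  unfolding f_fun_def by (rule LeastI_ex) (use Kn_graph Kn_chi in blast)

lemma f_le: "is_graph G \<Longrightarrow> is_graph H \<Longrightarrow> chi G \<ge> n \<Longrightarrow> chi H \<ge> n \<Longrightarrow>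
   f_fun n \<le> chi (dprod (G::nat set \<times> (nat \<times> nat) set) (H::nat set \<times> (nat \<times> nat) set))"
  unfolding f_fun_def by (rule Least_le) blast

lemma g_mono: "mono g_fun"
proof (rule monoI)
  fix m n :: nat assume "m \<le> n"
  obtain D1 D2 :: "nat set \<times> (nat \<times> nat) set" where "is_digraph D1" "is_digraph D2" "chi D1 \<ge> n" "chi D2 \<ge> n" "chi (dprod D1 D2) = g_fun n"
    using g_spec[of n] by blast
  then show "g_fun m \<le> g_fun n" using g_le[of D1 D2 m] \<open>m \<le> n\<close> by auto
qed

lemma h_mono: "mono h_fun"
proof (rule monoI)
  fix m n :: nat assume "m \<le> n"
  obtain D1 D2 :: "nat set \<times> (nat \<times> nat) set" where "is_digraph D1" "is_digraph D2" "chi D1 \<ge> n" "chi D2 \<ge> n"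
     "max (chi (dprod D1 D2)) (chi (dprod D1 (drev D2))) = h_fun n"
    using h_spec[of n] by blast
  then show "h_fun m \<le> h_fun n" using h_le[of D1 D2 m] \<open>m \<le> n\<close> by auto
qed

lemma dich: assumes "mono (u::nat \<Rightarrow> nat)" shows "(\<exists>K. \<forall>n. u n \<le> K) \<or> filterlim u at_top sequentially"
proof (rule disjCI)
  assume "\<not> filterlim u at_top sequentially"
  then obtain Z where Z: "\<not> eventually (\<lambda>x. Z \<le> u x) sequentially"
    unfolding filterlim_at_top by blast
  have "u n \<le> Z" for n
  proof -
    obtain m where "m \<ge> n" "\<not> Z \<le> u m" using Z unfolding eventually_sequentially by blast
    then show ?thesis using assms unfolding mono_def by (meson le_trans nat_le_linear)
  qed
  then show "\<exists>K. \<forall>n. u n \<le> K" by blast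
qed

lemma g_core: assumes K: "\<forall>n. g_fun n \<le> K" shows "g_fun n \<le> 3"
proof -
  obtain r where r: "\<forall>D. is_digraph D \<longrightarrow> chi D \<le> K \<longrightarrow> chi ((dn ^^ r) D) \<le> 3" using reduce by blast
  obtain N where N: "\<forall>D. is_digraph D \<longrightarrow> N \<le> chi D \<longrightarrow> n \<le> chi ((dn ^^ r) D)" using lowiter by blast
  obtain D1 D2 :: "nat set \<times> (nat \<times> nat) set" where D: "is_digraph D1" "is_digraph D2" "chi D1 \<ge> N" "chi D2 \<ge> N"
     "chi (dprod D1 D2) = g_fun N" using g_spec[of N] by blast
  have "chi (P D1 D2) \<le> K" using D K chi_dprod_P by metis
  then have c3: "chi ((dn ^^ r) (P D1 D2)) \<le> 3" using r P_digraph D by blast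
  obtain \<phi> where \<phi>: "hom \<phi> (P ((dn ^^ r) D1) ((dn ^^ r) D2)) ((dn ^^ r) (P D1 D2))" using hom_iterP by blast
  have dA: "is_digraph ((dn ^^ r) D1)" "is_digraph ((dn ^^ r) D2)" using dn_iter_digraph D by auto
  have "chi (P ((dn ^^ r) D1) ((dn ^^ r) D2)) \<le> 3"
    using chi_hom[OF \<phi> dn_iter_digraph[OF P_digraph[OF D(1,2)]]] c3 by linarith
  then have "chi (dprod ((dn ^^ r) D1) ((dn ^^ r) D2)) \<le> 3" using chi_dprod_P[OF dA] by simp
  moreover have "g_fun n \<le> chi (dprod ((dn ^^ r) D1) ((dn ^^ r) D2))"
    using g_le dA N D by blast
  ultimately show ?thesis by linarith
qed

lemma h_core: assumes K: "\<forall>n. h_fun n \<le> K" shows "h_fun n \<le> 3"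
proof -
  obtain r where r: "\<forall>D. is_digraph D \<longrightarrow> chi D \<le> K \<longrightarrow> chi ((dn ^^ r) D) \<le> 3" using reduce by blast
  obtain N where N: "\<forall>D. is_digraph D \<longrightarrow> N \<le> chi D \<longrightarrow> n \<le> chi ((dn ^^ r) D)" using lowiter by blast
  obtain D1 D2 :: "nat set \<times> (nat \<times> nat) set" where D: "is_digraph D1" "is_digraph D2" "chi D1 \<ge> N" "chi D2 \<ge> N"
     "max (chi (dprod D1 D2)) (chi (dprod D1 (drev D2))) = h_fun N" using h_spec[of N] by blast
  have dr: "is_digraph (drev D2)" using drev_digraph D by blast
  have "chi (P D1 D2) \<le> K" using D K chi_dprod_P by (metis max.bounded_iff)
  then have c3: "chi ((dn ^^ r) (P D1 D2)) \<le> 3" using r P_digraph D by blast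
  have "chi (P D1 (drev D2)) \<le> K" using D K chi_dprod_P dr by (metis max.bounded_iff)
  then have c3': "chi ((dn ^^ r) (P D1 (drev D2))) \<le> 3" using r P_digraph D dr by blast
  have dA: "is_digraph ((dn ^^ r) D1)" "is_digraph ((dn ^^ r) D2)" using dn_iter_digraph D by auto
  have dA': "is_digraph (drev ((dn ^^ r) D2))" using drev_digraph dA by blast
  obtain \<phi> where \<phi>: "hom \<phi> (P ((dn ^^ r) D1) ((dn ^^ r) D2)) ((dn ^^ r) (P D1 D2))" using hom_iterP by blast
  have "chi (P ((dn ^^ r) D1) ((dn ^^ r) D2)) \<le> 3"
    using chi_hom[OF \<phi> dn_iter_digraph[OF P_digraph[OF D(1,2)]]] c3 by linarith
  then have 1: "chi (dprod ((dn ^^ r) D1) ((dn ^^ r) D2)) \<le> 3" using chi_dprod_P[OF dA] by simp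
  obtain \<psi> where \<psi>: "hom \<psi> (drev ((dn ^^ r) D2)) ((dn ^^ r) (drev D2))" using hom_iterrev by blast
  obtain \<phi>' where \<phi>': "hom \<phi>' (P ((dn ^^ r) D1) ((dn ^^ r) (drev D2))) ((dn ^^ r) (P D1 (drev D2)))"
    using hom_iterP by blast
  obtain \<chi> where hh: "hom \<chi> (P ((dn ^^ r) D1) (drev ((dn ^^ r) D2))) ((dn ^^ r) (P D1 (drev D2)))"
    using hom_comp[OF hom_P[OF hom_id \<psi>] \<phi>'] by blast
  have "chi (P ((dn ^^ r) D1) (drev ((dn ^^ r) D2))) \<le> 3"
    using chi_hom[OF hh dn_iter_digraph[OF P_digraph[OF D(1) dr]]] c3' by linarith
  then have 2: "chi (dprod ((dn ^^ r) D1) (drev ((dn ^^ r) D2))) \<le> 3" using chi_dprod_P[OF dA(1) dA'] by simp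
  have "h_fun n \<le> max (chi (dprod ((dn ^^ r) D1) ((dn ^^ r) D2))) (chi (dprod ((dn ^^ r) D1) (drev ((dn ^^ r) D2))))"
    using h_le dA N D by blast
  then show ?thesis using 1 2 by linarith
qed

lemma h_le_f: "h_fun n \<le> f_fun n"
proof -
  obtain G H :: "nat set \<times> (nat \<times> nat) set" where GH: "is_graph G" "is_graph H" "chi G \<ge> n" "chi H \<ge> n" "chi (dprod G H) = f_fun n"
    using f_spec[of n] by blast
  have "drev H = H" using GH(2) unfolding is_graph_def drev_def by (simp add: sym_conv_converse_eq)
  moreover have "is_digraph G" "is_digraph H" using GH unfolding is_graph_def by auto
  ultimately show ?thesis using h_le[of G H n] GH by auto
qed

definition symm :: "nat set \<times> (nat \<times> nat) set \<Rightarrow> nat set \<times> (nat \<times> nat) set" where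
  "symm D = (fst D, snd D \<union> (snd D)\<inverse>)"

lemma symm_graph: "is_digraph D \<Longrightarrow> is_graph (symm D)"
  unfolding is_graph_def is_digraph_def symm_def irrefl_def sym_def by auto

lemma symm_chi: "is_digraph D \<Longrightarrow> chi D \<le> chi (symm D)"
proof -
  assume "is_digraph D"
  then have "is_digraph (symm D)" using symm_graph unfolding is_graph_def by blast
  moreover have "hom id D (symm D)" unfolding hom_def symm_def by auto
  ultimately show ?thesis using chi_hom by blast
qed

lemma enc3: "(a::nat) < 3 \<Longrightarrow> b < 3 \<Longrightarrow> a' < 3 \<Longrightarrow> b' < 3 \<Longrightarrow> 3*a + b = 3*a' + b' \<Longrightarrow> a = a' \<and> b = b'"
  by presburger

lemma f_core: assumes h3: "\<forall>n. h_fun n \<le> 3" shows "f_fun n \<le> 9"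
proof -
  obtain D1 D2 :: "nat set \<times> (nat \<times> nat) set" where D: "is_digraph D1" "is_digraph D2" "chi D1 \<ge> n" "chi D2 \<ge> n"
     "max (chi (dprod D1 D2)) (chi (dprod D1 (drev D2))) = h_fun n" using h_spec[of n] by blast
  have dr: "is_digraph (drev D2)" using drev_digraph D by blast
  obtain c1 where c1: "proper_colouring (dprod D1 D2) 3 c1"
    using chi_colouring_le[OF dprod_digraph[OF D(1,2)]] D(5) h3 by (metis max.bounded_iff)
  obtain c2 where c2: "proper_colouring (dprod D1 (drev D2)) 3 c2"
    using chi_colouring_le[OF dprod_digraph[OF D(1) dr]] D(5) h3 by (metis max.bounded_iff)
  have s1: "snd D1 \<subseteq> fst D1 \<times> fst D1" "snd D2 \<subseteq> fst D2 \<times> fst D2" using D unfolding is_digraph_def by auto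
  define col where "col p = 3 * c1 p + c2 p" for p
  have cb: "c1 (x,y) < 3" "c2 (x,y) < 3" if "x \<in> fst D1" "y \<in> fst D2" for x y
    using c1 c2 that unfolding proper_colouring_def dprod_def drev_def by auto
  have "proper_colouring (dprod (symm D1) (symm D2)) 9 col"
    unfolding proper_colouring_def
  proof (intro conjI ballI)
    fix p assume "p \<in> fst (dprod (symm D1) (symm D2))"
    then obtain x y where "p = (x,y)" "x \<in> fst D1" "y \<in> fst D2" unfolding dprod_def symm_def by auto
    then show "col p < 9" using cb unfolding col_def by fastforce
  next
    fix p assume p: "p \<in> snd (dprod (symm D1) (symm D2))"
    then obtain x y x' y' where xy: "p = ((x,y),(x',y'))"
      "(x,x') \<in> snd D1 \<or> (x',x) \<in> snd D1" "(y,y') \<in> snd D2 \<or> (y',y) \<in> snd D2"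
      unfolding dprod_def symm_def by auto
    have in1: "x \<in> fst D1" "x' \<in> fst D1" using xy(2) s1 by auto
    have in2: "y \<in> fst D2" "y' \<in> fst D2" using xy(3) s1 by auto
    have "c1 (x,y) \<noteq> c1 (x',y') \<or> c2 (x,y) \<noteq> c2 (x',y')"
      using xy(2,3) c1 c2 unfolding proper_colouring_def dprod_def drev_def by fastforce
    then have "col (x,y) \<noteq> col (x',y')"
      using enc3[OF cb(1)[OF in1(1) in2(1)] cb(2)[OF in1(1) in2(1)] cb(1)[OF in1(2) in2(2)] cb(2)[OF in1(2) in2(2)]]
      unfolding col_def by blast
    then show "case p of (u,v) \<Rightarrow> col u \<noteq> col v" using xy(1) by simp
  qed
  then have "chi (dprod (symm D1) (symm D2)) \<le> 9" using chi_le by blast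
  moreover have "f_fun n \<le> chi (dprod (symm D1) (symm D2))"
    using f_le symm_graph symm_chi D order_trans by metis
  ultimately show ?thesis by linarith
qed

theorem mainTheorem13:
  shows "((\<forall>n. g_fun n \<le> 3) \<or> filterlim g_fun at_top sequentially) \<and>
         ((\<forall>n. h_fun n \<le> 3) \<or> filterlim h_fun at_top sequentially) \<and>
         ((\<forall>n. f_fun n \<le> 9) \<or> filterlim f_fun at_top sequentially)"
proof -
  have G: "(\<forall>n. g_fun n \<le> 3) \<or> filterlim g_fun at_top sequentially"
    using dich[OF g_mono] g_core by blast
  have H: "(\<forall>n. h_fun n \<le> 3) \<or> filterlim h_fun at_top sequentially"
    using dich[OF h_mono] h_core by blast
  have F: "(\<forall>n. f_fun n \<le> 9) \<or> filterlim f_fun at_top sequentially"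
  proof (cases "\<forall>n. h_fun n \<le> 3")
    case True then show ?thesis using f_core by blast
  next
    case False
    then have "filterlim h_fun at_top sequentially" using H by blast
    then have "filterlim f_fun at_top sequentially"
      by (rule filterlim_at_top_mono) (simp add: h_le_f)
    then show ?thesis by blast
  qed
  show ?thesis using G H F by blast
qed

end
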